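(* Let $\theta$ be a comtrace alphabet. The map $\mathsf{dep2lct}:\mathsf{CDG}(\theta)\to\mathsf{LCT}(\theta)$, $D\mapsto D^\lozenge$, is injective: if $D_1,D_2\in\mathsf{CDG}(\theta)$ and $D_1^\lozenge=D_2^\lozenge$, then $D_1=D_2$.
   Context: Labeled relational structures $(X,P,Q,\lambda)$ are considered up to label-preserving isomorphism (bijections preserving/reflecting $P$ and $Q$ and preserving labels). $\lozenge$-closure: $(X,R_1,R_2)^\lozenge:=(X,(R_1\cup R_2)^*\circ R_1\circ(R_1\cup R_2)^*,(R_1\cup R_2)^*\setminus\mathrm{id}_X)$ ($^*$ = reflexive transitive closure), with labels unchanged. So-structures: $(X,\prec,\sqsubset)$ with (S1) $\neg(\alpha\sqsubset\alpha)$; (S2) $\alpha\prec\beta\Rightarrow\alpha\sqsubset\beta$; (S3) $\alpha\sqsubset\beta\sqsubset\gamma\wedge\alpha\neq\gamma\Rightarrow\alpha\sqsubset\gamma$; (S4) $(\alpha\sqsubset\beta\prec\gamma)\vee(\alpha\prec\beta\sqsubset\gamma)\Rightarrow\alpha\prec\gamma$. Quotient: $\alpha\equiv_\sqsubset\beta$ iff $\alpha=\beta$ or ($\alpha\sqsubset\beta\wedge\beta\sqsubset\alpha$); classes $[\alpha]$; $[\alpha]\hat\prec[\beta]$ iff $[\alpha]\neq[\beta]$ and $([\alpha]\times[\beta])\cap\prec\neq\emptyset$; $\hat\sqsubset$ likewise. $R^{\mathrm{cov}}:=\{(x,y):xRy\wedge\neg\exists z(xRz\wedge zRy)\}$. Comtrace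 alphabet: $\theta=(E,sim,ser)$, $E$ finite, $ser\subseteq sim\subseteq E\times E$, $sim$ irreflexive symmetric. Lsos-comtrace over $\theta$: the class of a finite labeled so-structure $(X,\prec,\sqsubset,\lambda)$, $\lambda:X\to E$, such that for all $\alpha\neq\beta$: (LC1) $[\alpha]((\hat\sqsubset)^{\mathrm{cov}}\cap\hat\prec)[\beta]\Rightarrow\lambda[[\alpha]]\times\lambda[[\beta]]\not\subseteq ser$; (LC2) $[\alpha]((\hat\sqsubset)^{\mathrm{cov}}\setminus\hat\prec)[\beta]\Rightarrow\lambda[[\beta]]\times\lambda[[\alpha]]\not\subseteq ser$; (LC3) for nonempty $A,B\subseteq[\alpha]$ with $A\cup B=[\alpha]$, $\lambda[A]\times\lambda[B]\not\subseteq ser$; (LC4) $(\lambda\alpha,\lambda\beta)\notin ser\Rightarrow\alpha\prec\beta\vee\beta\sqsubset\alpha$; (LC5) $(\lambda\alpha,\lambda\beta)\notin sim\Rightarrow\alpha\prec\beta\vee\beta\prec\alpha$. $\mathsf{LCT}(\theta)$ is the set of these. Cd-graph over $\theta$: the class of a finite labeled relational structure $(X,\to,\dashrightarrow,\lambda)$, $\lambda:X\to E$, with $\to,\dashrightarrow$ irreflexive, $(X,\to,\dashrightarrow)^\lozenge$ an so-structure, and for all $\alpha\neq\beta$: (CD1) $(\lambda\alpha,\lambda\beta)\notin sim\Rightarrow\alpha\to\beta\vee\beta\to\alpha$; (CD2) $(\lambda\alpha,\lambda\beta)\notin ser\Rightarrow\alpha\to\beta\vee\beta\dashrightarrow\alpha$;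 (CD3) $\alpha\to\beta\Rightarrow(\lambda\alpha,\lambda\beta)\notin ser$; (CD4) $\alpha\dashrightarrow\beta\Rightarrow(\lambda\beta,\lambda\alpha)\notin ser$. $\mathsf{CDG}(\theta)$ is the set of these; $D^\lozenge$ is an lsos-comtrace for $D\in\mathsf{CDG}(\theta)$. *)

theory Defs
  imports Main
begin

text \<open>A labeled relational structure is given by a carrier X, two relations P Q on X,
  and a labeling l. Structures are considered up to label-preserving isomorphism.\<close>

definition lstruct :: "'a set \<Rightarrow> 'a rel \<Rightarrow> 'a rel \<Rightarrow> bool" where
  "lstruct X P Q \<longleftrightarrow> finite X \<and> P \<subseteq> X \<times> X \<and> Q \<subseteq> X \<times> X"

definition lstruct_iso ::
  "('a \<Rightarrow> 'b) \<Rightarrow> 'a set \<Rightarrow> 'a rel \<Rightarrow> 'a rel \<Rightarrow> ('a \<Rightarrow> 'e)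
     \<Rightarrow> 'b set \<Rightarrow> 'b rel \<Rightarrow> 'b rel \<Rightarrow> ('b \<Rightarrow> 'e) \<Rightarrow> bool" where
  "lstruct_iso f X P Q l Y P' Q' l' \<longleftrightarrow>
     bij_betw f X Y \<and>
     (\<forall>x\<in>X. \<forall>y\<in>X. ((x, y) \<in> P \<longleftrightarrow> (f x, f y) \<in> P') \<and> ((x, y) \<in> Q \<longleftrightarrow> (f x, f y) \<in> Q')) \<and>
     (\<forall>x\<in>X. l' (f x) = l x)"

definition lstruct_isomorphic ::
  "'a set \<Rightarrow> 'a rel \<Rightarrow> 'a rel \<Rightarrow> ('a \<Rightarrow> 'e)
     \<Rightarrow> 'b set \<Rightarrow> 'b rel \<Rightarrow> 'b rel \<Rightarrow> ('b \<Rightarrow> 'e) \<Rightarrow> bool" where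
  "lstruct_isomorphic X P Q l Y P' Q' l' \<longleftrightarrow> (\<exists>f. lstruct_iso f X P Q l Y P' Q' l')"

definition rtcl_on :: "'a set \<Rightarrow> 'a rel \<Rightarrow> 'a rel" where
  "rtcl_on X R = Id_on X \<union> R\<^sup>+"

text \<open>The diamond closure (X,R1,R2)^\<lozenge>; the carrier and labels are unchanged.\<close>
definition dia1 :: "'a set \<Rightarrow> 'a rel \<Rightarrow> 'a rel \<Rightarrow> 'a rel" where
  "dia1 X R1 R2 = rtcl_on X (R1 \<union> R2) O R1 O rtcl_on X (R1 \<union> R2)"

definition dia2 :: "'a set \<Rightarrow> 'a rel \<Rightarrow> 'a rel \<Rightarrow> 'a rel" where
  "dia2 X R1 R2 = rtcl_on X (R1 \<union> R2) - Id_on X"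

definition so_structure :: "'a set \<Rightarrow> 'a rel \<Rightarrow> 'a rel \<Rightarrow> bool" where
  "so_structure X prec sqsub \<longleftrightarrow>
     (\<forall>a\<in>X. (a, a) \<notin> sqsub) \<and>
     (\<forall>a\<in>X. \<forall>b\<in>X. (a, b) \<in> prec \<longrightarrow> (a, b) \<in> sqsub) \<and>
     (\<forall>a\<in>X. \<forall>b\<in>X. \<forall>c\<in>X. (a, b) \<in> sqsub \<and> (b, c) \<in> sqsub \<and> a \<noteq> c \<longrightarrow> (a, c) \<in> sqsub) \<and>
     (\<forall>a\<in>X. \<forall>b\<in>X. \<forall>c\<in>X.
        ((a, b) \<in> sqsub \<and> (b, c) \<in> prec) \<or> ((a, b) \<in> prec \<and> (b, c) \<in> sqsub) \<longrightarrow> (a, c) \<in> prec)"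

definition comtrace_alphabet :: "'e set \<Rightarrow> 'e rel \<Rightarrow> 'e rel \<Rightarrow> bool" where
  "comtrace_alphabet E sim ser \<longleftrightarrow>
     finite E \<and> ser \<subseteq> sim \<and> sim \<subseteq> E \<times> E \<and> irrefl sim \<and> sym sim"

definition cd_graph ::
  "'e set \<Rightarrow> 'e rel \<Rightarrow> 'e rel \<Rightarrow> 'a set \<Rightarrow> 'a rel \<Rightarrow> 'a rel \<Rightarrow> ('a \<Rightarrow> 'e) \<Rightarrow> bool" where
  "cd_graph E sim ser X arr darr l \<longleftrightarrow>
     lstruct X arr darr \<and> l ` X \<subseteq> E \<and>
     (\<forall>a\<in>X. (a, a) \<notin> arr \<and> (a, a) \<notin> darr) \<and>
     so_structure X (dia1 X arr darr) (dia2 X arr darr) \<and>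
     (\<forall>a\<in>X. \<forall>b\<in>X. a \<noteq> b \<longrightarrow>
        ((l a, l b) \<notin> sim \<longrightarrow> (a, b) \<in> arr \<or> (b, a) \<in> arr) \<and>
        ((l a, l b) \<notin> ser \<longrightarrow> (a, b) \<in> arr \<or> (b, a) \<in> darr) \<and>
        ((a, b) \<in> arr \<longrightarrow> (l a, l b) \<notin> ser) \<and>
        ((a, b) \<in> darr \<longrightarrow> (l b, l a) \<notin> ser))"

end

theory Submission
  imports Defs
begin

lemma A_sub:
  assumes "cd_graph E sim ser X A D l" "(a,b) \<in> A"
  shows "(a,b) \<in> dia1 X A D"
proof -
  from assms have ab: "a \<in> X" "b \<in> X" unfolding cd_graph_def lstruct_def by auto
  have "(a,a) \<in> rtcl_on X (A \<union> D)" "(b,b) \<in> rtcl_on X (A \<union> D)"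
    using ab unfolding rtcl_on_def by auto
  thus ?thesis using assms(2) unfolding dia1_def by blast
qed

lemma D_sub:
  assumes "cd_graph E sim ser X A D l" "(a,b) \<in> D"
  shows "(a,b) \<in> dia2 X A D"
proof -
  from assms have ab: "a \<in> X" "b \<in> X" "a \<noteq> b" unfolding cd_graph_def lstruct_def by auto
  thus ?thesis using assms(2) unfolding dia2_def rtcl_on_def by auto
qed

lemma charA:
  assumes G: "cd_graph E sim ser X A D l" and ab: "a \<in> X" "b \<in> X"
  shows "(a,b) \<in> A \<longleftrightarrow> (a,b) \<in> dia1 X A D \<and> (l a, l b) \<notin> ser"
proof
  assume h: "(a,b) \<in> A"
  have "a \<noteq> b" using h G ab unfolding cd_graph_def by auto
  thus "(a,b) \<in> dia1 X A D \<and> (l a, l b) \<notin> ser"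
  proof -
    assume ne: "a \<noteq> b"
    have "(l a, l b) \<notin> ser" using G ab ne h unfolding cd_graph_def by metis
    thus ?thesis using A_sub[OF G h] by simp
  qed
next
  assume h: "(a,b) \<in> dia1 X A D \<and> (l a, l b) \<notin> ser"
  have so: "so_structure X (dia1 X A D) (dia2 X A D)" using G unfolding cd_graph_def by auto
  have ne: "a \<noteq> b"
  proof
    assume "a = b"
    hence "(a,a) \<in> dia1 X A D" using h by simp
    thus False using so ab unfolding so_structure_def by blast
  qed
  have "(a,b) \<in> A \<or> (b,a) \<in> D" using G ab ne h unfolding cd_graph_def by metis
  moreover have "(b,a) \<notin> D"
  proof
    assume "(b,a) \<in> D"
    hence "(b,a) \<in> dia2 X A D" by (rule D_sub[OF G])
    moreover have "\<forall>a\<in>X. \<forall>b\<in>X. \<forall>c\<in>X.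
        ((a, b) \<in> dia2 X A D \<and> (b, c) \<in> dia1 X A D) \<or> ((a, b) \<in> dia1 X A D \<and> (b, c) \<in> dia2 X A D) \<longrightarrow> (a, c) \<in> dia1 X A D"
      using so unfolding so_structure_def by blast
    ultimately have "(a,a) \<in> dia1 X A D" using h ab by blast
    moreover have "\<forall>a\<in>X. (a, a) \<notin> dia2 X A D" "\<forall>a\<in>X. \<forall>b\<in>X. (a, b) \<in> dia1 X A D \<longrightarrow> (a, b) \<in> dia2 X A D"
      using so unfolding so_structure_def by blast+
    ultimately show False using ab by blast
  qed
  ultimately show "(a,b) \<in> A" by blast
qed

lemma charD:
  assumes G: "cd_graph E sim ser X A D l" and ab: "a \<in> X" "b \<in> X"
  shows "(a,b) \<in> D \<longleftrightarrow> (a,b) \<in> dia2 X A D \<and> (l b, l a) \<notin> ser"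
proof
  assume h: "(a,b) \<in> D"
  have "a \<noteq> b" using h G ab unfolding cd_graph_def by auto
  thus "(a,b) \<in> dia2 X A D \<and> (l b, l a) \<notin> ser"
  proof -
    assume ne: "a \<noteq> b"
    have "(l b, l a) \<notin> ser" using G ab ne h unfolding cd_graph_def by metis
    thus ?thesis using D_sub[OF G h] by simp
  qed
next
  assume h: "(a,b) \<in> dia2 X A D \<and> (l b, l a) \<notin> ser"
  have so: "so_structure X (dia1 X A D) (dia2 X A D)" using G unfolding cd_graph_def by auto
  have ne: "a \<noteq> b"
  proof
    assume "a = b"
    hence "(a,a) \<in> dia2 X A D" using h by simp
    thus False using so ab unfolding so_structure_def by blast
  qed
  have "(b,a) \<in> A \<or> (a,b) \<in> D" using G ab ne h unfolding cd_graph_def by metis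
  moreover have "(b,a) \<notin> A"
  proof
    assume "(b,a) \<in> A"
    hence "(b,a) \<in> dia1 X A D" by (rule A_sub[OF G])
    moreover have "\<forall>a\<in>X. \<forall>b\<in>X. \<forall>c\<in>X.
        ((a, b) \<in> dia2 X A D \<and> (b, c) \<in> dia1 X A D) \<or> ((a, b) \<in> dia1 X A D \<and> (b, c) \<in> dia2 X A D) \<longrightarrow> (a, c) \<in> dia1 X A D"
      using so unfolding so_structure_def by blast
    ultimately have "(a,a) \<in> dia1 X A D" using h ab by blast
    moreover have "\<forall>a\<in>X. (a, a) \<notin> dia2 X A D" "\<forall>a\<in>X. \<forall>b\<in>X. (a, b) \<in> dia1 X A D \<longrightarrow> (a, b) \<in> dia2 X A D"
      using so unfolding so_structure_def by blast+
    ultimately show False using ab by blast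
  qed
  ultimately show "(a,b) \<in> D" by blast
qed

theorem mainTheorem11:
  fixes E :: "'e set" and sim ser :: "'e rel"
    and X1 :: "'a set" and A1 D1 :: "'a rel" and l1 :: "'a \<Rightarrow> 'e"
    and X2 :: "'b set" and A2 D2 :: "'b rel" and l2 :: "'b \<Rightarrow> 'e"
  assumes "comtrace_alphabet E sim ser"
    and "cd_graph E sim ser X1 A1 D1 l1"
    and "cd_graph E sim ser X2 A2 D2 l2"
    and "lstruct_isomorphic X1 (dia1 X1 A1 D1) (dia2 X1 A1 D1) l1
                            X2 (dia1 X2 A2 D2) (dia2 X2 A2 D2) l2"
  shows "lstruct_isomorphic X1 A1 D1 l1 X2 A2 D2 l2"
proof -
  obtain f where f: "lstruct_iso f X1 (dia1 X1 A1 D1) (dia2 X1 A1 D1) l1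
                            X2 (dia1 X2 A2 D2) (dia2 X2 A2 D2) l2"
    using assms(4) unfolding lstruct_isomorphic_def by blast
  have bij: "bij_betw f X1 X2" using f unfolding lstruct_iso_def by blast
  have fx: "\<And>x. x \<in> X1 \<Longrightarrow> f x \<in> X2" using bij by (meson bij_betwE)
  have "lstruct_iso f X1 A1 D1 l1 X2 A2 D2 l2"
    unfolding lstruct_iso_def
  proof (intro conjI)
    show "bij_betw f X1 X2" by (rule bij)
  next
    show "\<forall>x\<in>X1. l2 (f x) = l1 x" using f unfolding lstruct_iso_def by blast
  next
    show "\<forall>x\<in>X1. \<forall>y\<in>X1. ((x, y) \<in> A1 \<longleftrightarrow> (f x, f y) \<in> A2) \<and> ((x, y) \<in> D1 \<longleftrightarrow> (f x, f y) \<in> D2)"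
    proof (intro ballI)
    fix x y assume xy: "x \<in> X1" "y \<in> X1"
    have lab: "l2 (f x) = l1 x" "l2 (f y) = l1 y" using f xy unfolding lstruct_iso_def by auto
    have r: "((x, y) \<in> dia1 X1 A1 D1 \<longleftrightarrow> (f x, f y) \<in> dia1 X2 A2 D2)"
            "((x, y) \<in> dia2 X1 A1 D1 \<longleftrightarrow> (f x, f y) \<in> dia2 X2 A2 D2)"
      using f xy unfolding lstruct_iso_def by auto
    show "((x, y) \<in> A1 \<longleftrightarrow> (f x, f y) \<in> A2) \<and> ((x, y) \<in> D1 \<longleftrightarrow> (f x, f y) \<in> D2)"
      using charA[OF assms(2) xy] charA[OF assms(3) fx[OF xy(1)] fx[OF xy(2)]]
        charD[OF assms(2) xy] charD[OF assms(3) fx[OF xy(1)] fx[OF xy(2)]] lab r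
      by auto
    qed
  qed
  thus ?thesis unfolding lstruct_isomorphic_def by blast
qed

end
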